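(* For all integers $k\geq 2$ and $w\geq 2$, there exists a finite poset $P$ of width $w$ that does not contain $\mathbf{k}+\mathbf{k}$ as an induced subposet, and an ordering of the elements of $P$ such that First-Fit, presented with the elements in this order, uses at least $(k-1)(w-1)$ chains.
   Context: The width of a poset is the maximum size of an antichain. $\mathbf{k}+\mathbf{k}$ denotes the poset consisting of two disjoint chains $A,B$ with $|A|=|B|=k$ in which every element of $A$ is incomparable with every element of $B$. The First-Fit algorithm receives the elements of $P$ one at a time in some order and puts each new element $v$ into the first chain of the current chain partition all of whose elements are comparable to $v$, opening a new chain at the end of the partition if there is none. *)

theory Defs
  imports Main
begin

definition poset_on :: "'a set \<Rightarrow> ('a \<Rightarrow> 'a \<Rightarrow> bool) \<Rightarrow> bool" where
  "poset_on P le \<longleftrightarrow>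
     (\<forall>x\<in>P. le x x) \<and>
     (\<forall>x\<in>P. \<forall>y\<in>P. le x y \<and> le y x \<longrightarrow> x = y) \<and>
     (\<forall>x\<in>P. \<forall>y\<in>P. \<forall>z\<in>P. le x y \<and> le y z \<longrightarrow> le x z)"

definition comparable :: "('a \<Rightarrow> 'a \<Rightarrow> bool) \<Rightarrow> 'a \<Rightarrow> 'a \<Rightarrow> bool" where
  "comparable le x y \<longleftrightarrow> le x y \<or> le y x"

definition is_chain :: "('a \<Rightarrow> 'a \<Rightarrow> bool) \<Rightarrow> 'a set \<Rightarrow> bool" where
  "is_chain le C \<longleftrightarrow> (\<forall>x\<in>C. \<forall>y\<in>C. comparable le x y)"

definition is_antichain :: "('a \<Rightarrow> 'a \<Rightarrow> bool) \<Rightarrow> 'a set \<Rightarrow> bool" where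
  "is_antichain le A \<longleftrightarrow> (\<forall>x\<in>A. \<forall>y\<in>A. x \<noteq> y \<longrightarrow> \<not> comparable le x y)"

definition width :: "'a set \<Rightarrow> ('a \<Rightarrow> 'a \<Rightarrow> bool) \<Rightarrow> nat" where
  "width P le = Max (card ` {A. A \<subseteq> P \<and> is_antichain le A})"

definition contains_kk :: "'a set \<Rightarrow> ('a \<Rightarrow> 'a \<Rightarrow> bool) \<Rightarrow> nat \<Rightarrow> bool" where
  "contains_kk P le k \<longleftrightarrow>
     (\<exists>A B. A \<subseteq> P \<and> B \<subseteq> P \<and> A \<inter> B = {} \<and> card A = k \<and> card B = k \<and>
        is_chain le A \<and> is_chain le B \<and>
        (\<forall>a\<in>A. \<forall>b\<in>B. \<not> comparable le a b))"

fun ff_insert :: "('a \<Rightarrow> 'a \<Rightarrow> bool) \<Rightarrow> 'a \<Rightarrow> 'a set list \<Rightarrow> 'a set list" where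
  "ff_insert le v [] = [{v}]"
| "ff_insert le v (C # cs) =
     (if \<forall>u\<in>C. comparable le u v then insert v C # cs else C # ff_insert le v cs)"

definition first_fit :: "('a \<Rightarrow> 'a \<Rightarrow> bool) \<Rightarrow> 'a list \<Rightarrow> 'a set list" where
  "first_fit le xs = foldl (\<lambda>cs v. ff_insert le v cs) [] xs"

end

theory Submission
  imports Defs
begin

lemma ff_insert_new:
  "\<forall>C\<in>set cs. \<exists>u\<in>C. \<not> comparable le u v \<Longrightarrow> ff_insert le v cs = cs @ [{v}]"
  by (induction cs) auto

lemma ff_insert_last:
  "\<forall>C\<in>set cs. \<exists>u\<in>C. \<not> comparable le u v \<Longrightarrow> \<forall>u\<in>S. comparable le u v \<Longrightarrow>
   ff_insert le v (cs @ [S]) = cs @ [insert v S]"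
  by (induction cs) auto

lemma ff_len: "length (ff_insert le v cs) \<ge> length cs"
  by (induction cs) auto

lemma ff_fold_len: "length (foldl (\<lambda>cs v. ff_insert le v cs) cs ys) \<ge> length cs"
proof (induction ys arbitrary: cs)
  case (Cons y ys)
  then show ?case using ff_len[of cs le y] by (simp) (meson le_trans)
qed simp

lemma ff_fold_chain:
  assumes "\<forall>v\<in>set L. \<forall>C\<in>set cs. \<exists>u\<in>C. \<not> comparable le u v"
    and "\<forall>u\<in>S \<union> set L. \<forall>v\<in>set L. comparable le u v"
  shows "foldl (\<lambda>cs v. ff_insert le v cs) (cs @ [S]) L = cs @ [S \<union> set L]"
  using assms
proof (induction L arbitrary: S)
  case (Cons v L)
  have "ff_insert le v (cs @ [S]) = cs @ [insert v S]"
    using Cons.prems by (intro ff_insert_last) auto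
  moreover have "foldl (\<lambda>cs v. ff_insert le v cs) (cs @ [insert v S]) L = cs @ [insert v S \<union> set L]"
    using Cons.prems by (intro Cons.IH) auto
  ultimately show ?case by simp
qed simp

lemma ff_fold_new:
  assumes "L \<noteq> []" "\<forall>v\<in>set L. \<forall>C\<in>set cs. \<exists>u\<in>C. \<not> comparable le u v"
    and "\<forall>u\<in>set L. \<forall>v\<in>set L. comparable le u v"
  shows "foldl (\<lambda>cs v. ff_insert le v cs) cs L = cs @ [set L]"
proof -
  obtain v L' where L: "L = v # L'" using assms(1) by (cases L) auto
  have "ff_insert le v cs = cs @ [{v}]" using assms(2) L by (intro ff_insert_new) auto
  moreover have "foldl (\<lambda>cs v. ff_insert le v cs) (cs @ [{v}]) L' = cs @ [{v} \<union> set L']"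
    using assms L by (intro ff_fold_chain) auto
  ultimately show ?thesis using L by simp
qed

lemma ff_concat:
  assumes ne: "\<And>i. i < M \<Longrightarrow> g i \<noteq> []"
    and ch: "\<And>i u v. i < M \<Longrightarrow> u \<in> set (g i) \<Longrightarrow> v \<in> set (g i) \<Longrightarrow> comparable le u v"
    and inc: "\<And>i i' v. i < M \<Longrightarrow> i' < i \<Longrightarrow> v \<in> set (g i) \<Longrightarrow> \<exists>u\<in>set (g i'). \<not> comparable le u v"
  shows "first_fit le (concat (map g [0..<M])) = map (set \<circ> g) [0..<M]"
  using assms
proof (induction M)
  case 0
  then show ?case by (simp add: first_fit_def)
next
  case (Suc M)
  have IH: "first_fit le (concat (map g [0..<M])) = map (set \<circ> g) [0..<M]"
  proof (rule Suc.IH)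
    show "\<And>i. i < M \<Longrightarrow> g i \<noteq> []" by (meson Suc.prems(1) less_SucI)
    show "\<And>i u v. i < M \<Longrightarrow> u \<in> set (g i) \<Longrightarrow> v \<in> set (g i) \<Longrightarrow> comparable le u v"
      by (meson Suc.prems(2) less_SucI)
    show "\<And>i i' v. i < M \<Longrightarrow> i' < i \<Longrightarrow> v \<in> set (g i) \<Longrightarrow> \<exists>u\<in>set (g i'). \<not> comparable le u v"
      by (meson Suc.prems(3) less_SucI)
  qed
  have "first_fit le (concat (map g [0..<Suc M])) =
        foldl (\<lambda>cs v. ff_insert le v cs) (first_fit le (concat (map g [0..<M]))) (g M)"
    by (simp add: first_fit_def)
  also have "\<dots> = map (set \<circ> g) [0..<M] @ [set (g M)]"
    unfolding IH
  proof (rule ff_fold_new)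
    show "g M \<noteq> []" using Suc.prems by auto
    show "\<forall>v\<in>set (g M). \<forall>C\<in>set (map (set \<circ> g) [0..<M]). \<exists>u\<in>C. \<not> comparable le u v"
      using Suc.prems(3)[of M] by auto
    show "\<forall>u\<in>set (g M). \<forall>v\<in>set (g M). comparable le u v"
      using Suc.prems(2)[of M] by auto
  qed
  finally show ?case by simp
qed

definition leW :: "nat \<Rightarrow> nat \<Rightarrow> nat \<Rightarrow> nat \<Rightarrow> bool" where
  "leW W D n m \<longleftrightarrow> (n mod W = m mod W \<and> n div W \<le> m div W) \<or> n div W + D < m div W"

lemma inc_iff:
  "\<not> comparable (leW W D) n m \<longleftrightarrow>
     n mod W \<noteq> m mod W \<and> n div W \<le> m div W + D \<and> m div W \<le> n div W + D"
  unfolding comparable_def leW_def by auto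

lemma same_pos_col: "(n::nat) div W = m div W \<Longrightarrow> n mod W = m mod W \<Longrightarrow> n = m"
  by (metis div_mult_mod_eq[of n W] div_mult_mod_eq[of m W])

lemma leW_poset: "poset_on P (leW W D)"
  unfolding poset_on_def leW_def
  by (auto intro: same_pos_col)

definition elem :: "nat \<Rightarrow> nat \<Rightarrow> nat \<Rightarrow> nat \<Rightarrow> nat" where
  "elem W D c t = (t*(D+1) + c div (W-1)) * W + (c mod (W-1) + t) mod W"

lemma elem_div: "W \<ge> 2 \<Longrightarrow> elem W D c t div W = t*(D+1) + c div (W-1)"
  unfolding elem_def by simp

lemma elem_mod: "W \<ge> 2 \<Longrightarrow> elem W D c t mod W = (c mod (W-1) + t) mod W"
  unfolding elem_def by simp

lemma mod_cancel_lt: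
  fixes a b t W :: nat
  assumes h: "a < W" "b < W" "(a + t) mod W = (b + t) mod W" shows "a = b"
proof -
  have "int ((a + t) mod W) = int ((b + t) mod W)" using h(3) by simp
  hence "(int a + int t) mod int W = (int b + int t) mod int W" by (simp add: zmod_int)
  hence "int W dvd (int a + int t) - (int b + int t)" using mod_eq_dvd_iff by blast
  hence d: "int W dvd int a - int b" by simp
  show "a = b"
  proof (rule ccontr)
    assume "a \<noteq> b"
    hence "int a - int b \<noteq> 0" by simp
    hence "int W \<le> \<bar>int a - int b\<bar>" using d
      using dvd_imp_le_int by presburger
    thus False using h by simp
  qed
qed

lemma mod_suc_neq: "(W::nat) \<ge> 2 \<Longrightarrow> (x + 1) mod W \<noteq> x mod W"
  by (simp add: mod_Suc)


lemma cdiv_le: "(W::nat) \<ge> 2 \<Longrightarrow> c < (D+1)*(W-1) \<Longrightarrow> c div (W-1) \<le> D"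
  by (metis Suc_eq_plus1 less_Suc_eq_le less_mult_imp_div_less)

lemma inc_elem:
  assumes W: "W \<ge> 2"
    and m: "(c' mod (W-1) + t') mod W \<noteq> (c mod (W-1) + t) mod W"
    and p1: "t'*(D+1) + c' div (W-1) \<le> t*(D+1) + c div (W-1) + D"
    and p2: "t*(D+1) + c div (W-1) \<le> t'*(D+1) + c' div (W-1) + D"
  shows "\<not> comparable (leW W D) (elem W D c' t') (elem W D c t)"
  unfolding inc_iff elem_div[OF W] elem_mod[OF W] using m p1 p2 by blast

lemma elem_inc:
  assumes W: "W \<ge> 2" and c: "c < (D+1)*(W-1)" and c': "c' < c" and t: "t \<le> D - c div (W-1)"
  shows "\<exists>t'\<le>D - c' div (W-1). \<not> comparable (leW W D) (elem W D c' t') (elem W D c t)"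
proof -
  define j where "j = c div (W-1)"
  define s where "s = c mod (W-1)"
  define j' where "j' = c' div (W-1)"
  define s' where "s' = c' mod (W-1)"
  have jD: "j \<le> D" unfolding j_def using cdiv_le[OF W c] .
  have jj: "j' \<le> j" unfolding j_def j'_def using c' less_imp_le div_le_mono by blast
  have sW: "s < W" "s' < W" unfolding s_def s'_def using W
    by (metis One_nat_def diff_less le_trans less_trans mod_less_divisor one_le_numeral zero_less_diff zero_less_one Suc_1 Suc_le_lessD)+
  have cj: "c = j*(W-1) + s" "c' = j'*(W-1) + s'" unfolding j_def s_def j'_def s'_def
    using div_mult_mod_eq[of c "W-1"] div_mult_mod_eq[of c' "W-1"] by presburger+
  show ?thesis
  proof (cases "j' = j")
    case True
    hence "s' \<noteq> s" using cj c' by auto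
    hence m: "(s' + t) mod W \<noteq> (s + t) mod W" using mod_cancel_lt[of s' W s t] sW by blast
    have tt: "t \<le> D - j'" using t True unfolding j_def by simp
    have "\<not> comparable (leW W D) (elem W D c' t) (elem W D c t)"
      by (rule inc_elem[OF W]) (use m True in \<open>simp_all add: j_def j'_def s_def s'_def\<close>)
    thus ?thesis using tt unfolding j'_def by blast
  next
    case False
    hence lt: "j' < j" using jj by simp
    show ?thesis
    proof (cases "(s' + t) mod W = (s + t) mod W")
      case False
      have tt: "t \<le> D - j'" using t lt unfolding j_def by simp
      have p1: "t*(D+1) + j' \<le> t*(D+1) + j + D" using lt by simp
      have p2: "t*(D+1) + j \<le> t*(D+1) + j' + D" using jD by simp
      have "\<not> comparable (leW W D) (elem W D c' t) (elem W D c t)"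
        by (rule inc_elem[OF W]) (use False p1 p2 in \<open>simp_all add: j_def j'_def s_def s'_def\<close>)
      thus ?thesis using tt unfolding j'_def by blast
    next
      case True
      have "(s' + (t+1)) mod W \<noteq> (s' + t) mod W" using mod_suc_neq[OF W, of "s'+t"] by simp
      hence m: "(s' + (t+1)) mod W \<noteq> (s + t) mod W" using True by simp
      have tt: "t + 1 \<le> D - j'" using t lt jD unfolding j_def by simp
      have p1: "(t+1)*(D+1) + j' \<le> t*(D+1) + j + D" using lt by simp
      have p2: "t*(D+1) + j \<le> (t+1)*(D+1) + j' + D" using jD by simp
      have "\<not> comparable (leW W D) (elem W D c' (t+1)) (elem W D c t)"
        by (rule inc_elem[OF W]) (use m p1 p2 in \<open>simp_all add: j_def j'_def s_def s'_def\<close>)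
      thus ?thesis using tt unfolding j'_def by blast
    qed
  qed
qed

lemma elem_chain:
  assumes W: "W \<ge> 2"
  shows "comparable (leW W D) (elem W D c t) (elem W D c t')"
proof (cases "t = t'")
  case True thus ?thesis by (simp add: comparable_def leW_def)
next
  case False
  hence "t + 1 \<le> t' \<or> t' + 1 \<le> t" by auto
  hence "t*(D+1) + D < t'*(D+1) \<or> t'*(D+1) + D < t*(D+1)"
  proof
    assume "t + 1 \<le> t'"
    hence "(t+1)*(D+1) \<le> t'*(D+1)" by (intro mult_right_mono) auto
    thus ?thesis by simp
  next
    assume "t' + 1 \<le> t"
    hence "(t'+1)*(D+1) \<le> t*(D+1)" by (intro mult_right_mono) auto
    thus ?thesis by simp
  qed
  thus ?thesis using W by (auto simp: comparable_def leW_def elem_div)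
qed

lemma div_blk: "(x::nat) < D+1 \<Longrightarrow> (t*(D+1) + x) div (D+1) = t"
  by (metis Euclidean_Rings.div_eq_0_iff add.right_neutral div_mult_self3 less_zeroE)

lemma elem_inj:
  assumes W: "W \<ge> 2" and c: "c < (D+1)*(W-1)" and c': "c' < (D+1)*(W-1)"
    and e: "elem W D c t = elem W D c' t'"
  shows "c = c' \<and> t = t'"
proof -
  have j: "c div (W-1) < D+1" "c' div (W-1) < D+1" using cdiv_le[OF W c] cdiv_le[OF W c'] by auto
  have p: "t*(D+1) + c div (W-1) = t'*(D+1) + c' div (W-1)"
    using arg_cong[OF e, of "\<lambda>x. x div W"] W by (simp add: elem_div)
  have "(t*(D+1) + c div (W-1)) div (D+1) = t" using j(1) by (rule div_blk)
  moreover have "(t'*(D+1) + c' div (W-1)) div (D+1) = t'" using j(2) by (rule div_blk)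
  ultimately have tt: "t = t'" using p by simp
  hence jj: "c div (W-1) = c' div (W-1)" using p by simp
  have "(c mod (W-1) + t) mod W = (c' mod (W-1) + t) mod W"
    using arg_cong[OF e, of "\<lambda>x. x mod W"] W tt by (simp add: elem_mod)
  moreover have W1: "W - 1 > 0" using W by simp
  hence "c mod (W-1) < W - 1" "c' mod (W-1) < W - 1" by simp_all
  hence "c mod (W-1) < W" "c' mod (W-1) < W" by linarith+
  ultimately have mm: "c mod (W-1) = c' mod (W-1)" using mod_cancel_lt by blast
  have "c = c div (W-1) * (W-1) + c mod (W-1)" by (simp only: div_mult_mod_eq)
  also have "\<dots> = c' div (W-1) * (W-1) + c' mod (W-1)" by (simp only: jj mm)
  also have "\<dots> = c'" by (simp only: div_mult_mod_eq)
  finally have "c = c'" .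
  thus ?thesis using tt by simp
qed

lemma elem_bound:
  assumes W: "W \<ge> 2" and c: "c < (D+1)*(W-1)" and t: "t \<le> D - c div (W-1)"
  shows "elem W D c t < (D+1)*(D+1)*W"
proof -
  have jD: "c div (W-1) \<le> D" using cdiv_le[OF W c] .
  have "t*(D+1) + c div (W-1) \<le> (D - c div (W-1))*(D+1) + c div (W-1)"
    using mult_right_mono[OF t, of "D+1"] by linarith
  also have "\<dots> \<le> D*(D+1) + D" using jD
    by (metis add_le_mono diff_le_self mult_le_mono1)
  finally have "t*(D+1) + c div (W-1) + 1 \<le> (D+1)*(D+1)" by (simp add: algebra_simps)
  hence "(t*(D+1) + c div (W-1) + 1) * W \<le> (D+1)*(D+1)*W" by (intro mult_right_mono) auto
  moreover have "elem W D c t < (t*(D+1) + c div (W-1) + 1) * W"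
    unfolding elem_def using W by (simp add: algebra_simps)
  ultimately show ?thesis by linarith
qed


lemma card_range:
  assumes "finite (S::nat set)" "card S = k" "k \<ge> 1"
  shows "Min S + (k - 1) \<le> Max S"
proof -
  have ne: "S \<noteq> {}" using assms by auto
  have "S \<subseteq> {Min S..Max S}" using assms(1) ne by auto
  hence "card S \<le> card {Min S..Max S}" by (intro card_mono) auto
  thus ?thesis using assms by simp
qed

lemma chain_inj:
  assumes "is_chain (leW W D) A"
  shows "inj_on (\<lambda>n. n div W) A"
proof (rule inj_onI)
  fix n m assume nm: "n \<in> A" "m \<in> A" "n div W = m div W"
  hence "comparable (leW W D) n m" using assms unfolding is_chain_def by auto
  hence "n mod W = m mod W" using nm(3) unfolding comparable_def leW_def by auto
  thus "n = m" using nm(3) by (rule same_pos_col[rotated])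
qed

lemma kk_free:
  assumes k: "k \<ge> 2"
  shows "\<not> contains_kk P (leW W (k-2)) k"
proof
  assume "contains_kk P (leW W (k-2)) k"
  then obtain A B where AB: "card A = k" "card B = k" "is_chain (leW W (k-2)) A" "is_chain (leW W (k-2)) B"
    "\<forall>a\<in>A. \<forall>b\<in>B. \<not> comparable (leW W (k-2)) a b"
    unfolding contains_kk_def by blast
  define f where "f = (\<lambda>n::nat. n div W)"
  have fin: "finite A" "finite B" using AB k by (auto intro: card_ge_0_finite)
  have cA: "card (f ` A) = k" using chain_inj[OF AB(3)] AB(1) unfolding f_def by (simp add: card_image)
  have cB: "card (f ` B) = k" using chain_inj[OF AB(4)] AB(2) unfolding f_def by (simp add: card_image)
  have finA: "finite (f ` A)" and finB: "finite (f ` B)" using fin by auto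
  have neA: "f ` A \<noteq> {}" and neB: "f ` B \<noteq> {}" using cA cB k by auto
  have rA: "Min (f`A) + (k-1) \<le> Max (f`A)" using card_range[OF finA cA] k by simp
  have rB: "Min (f`B) + (k-1) \<le> Max (f`B)" using card_range[OF finB cB] k by simp
  obtain a2 where a2: "a2 \<in> A" "f a2 = Max (f`A)" using Max_in[OF finA neA] by auto
  obtain a1 where a1: "a1 \<in> A" "f a1 = Min (f`A)" using Min_in[OF finA neA] by auto
  obtain b2 where b2: "b2 \<in> B" "f b2 = Max (f`B)" using Max_in[OF finB neB] by auto
  obtain b1 where b1: "b1 \<in> B" "f b1 = Min (f`B)" using Min_in[OF finB neB] by auto
  have "\<not> comparable (leW W (k-2)) a2 b1" using AB(5) a2 b1 by blast
  hence "f a2 \<le> f b1 + (k-2)" unfolding f_def by (simp add: inc_iff)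
  moreover have "\<not> comparable (leW W (k-2)) a1 b2" using AB(5) a1 b2 by blast
  hence "f b2 \<le> f a1 + (k-2)" unfolding f_def by (simp add: inc_iff)
  ultimately show False using rA rB a1 a2 b1 b2 k by linarith
qed

lemma width_eq:
  assumes W: "W \<ge> 2" and N: "N \<ge> 1"
  shows "width {..<N*W} (leW W D) = W"
  unfolding width_def
proof (rule Max_eqI)
  show "finite (card ` {A. A \<subseteq> {..<N*W} \<and> is_antichain (leW W D) A})"
    by (rule finite_imageI) (rule finite_subset[of _ "Pow {..<N*W}"], auto)
next
  fix y assume "y \<in> card ` {A. A \<subseteq> {..<N*W} \<and> is_antichain (leW W D) A}"
  then obtain A where A: "A \<subseteq> {..<N*W}" "is_antichain (leW W D) A" "y = card A" by auto
  have "inj_on (\<lambda>n. n mod W) A"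
  proof (rule inj_onI)
    fix n m assume nm: "n \<in> A" "m \<in> A" "n mod W = m mod W"
    show "n = m"
    proof (rule ccontr)
      assume "n \<noteq> m"
      hence "\<not> comparable (leW W D) n m" using A(2) nm unfolding is_antichain_def by auto
      thus False using nm(3) by (simp add: inc_iff)
    qed
  qed
  hence "card A = card ((\<lambda>n. n mod W) ` A)" by (simp add: card_image)
  also have "\<dots> \<le> card {..<W}" using W by (intro card_mono) auto
  finally show "y \<le> W" using A by simp
next
  have "{..<W} \<subseteq> {..<N*W}" using N by (auto intro: less_le_trans)
  moreover have "is_antichain (leW W D) {..<W}"
    unfolding is_antichain_def by (auto simp: inc_iff)
  ultimately show "W \<in> card ` {A. A \<subseteq> {..<N*W} \<and> is_antichain (leW W D) A}"
    by (intro image_eqI[of _ _ "{..<W}"]) auto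
qed


declare upt_Suc[simp del]

definition cls :: "nat \<Rightarrow> nat \<Rightarrow> nat \<Rightarrow> nat list" where
  "cls W D c = map (elem W D c) [0..<D - c div (W-1) + 1]"

lemma ff_pre:
  assumes W: "W \<ge> 2"
  shows "first_fit (leW W D) (concat (map (cls W D) [0..<(D+1)*(W-1)])) =
         map (set \<circ> cls W D) [0..<(D+1)*(W-1)]"
proof (rule ff_concat)
  fix i assume "i < (D+1)*(W-1)"
  show "cls W D i \<noteq> []" unfolding cls_def by simp
next
  fix i u v assume "u \<in> set (cls W D i)" "v \<in> set (cls W D i)"
  thus "comparable (leW W D) u v" unfolding cls_def using elem_chain[OF W] by auto
next
  fix i i' v assume i: "i < (D+1)*(W-1)" "i' < i" "v \<in> set (cls W D i)"
  then obtain t where t: "t \<le> D - i div (W-1)" "v = elem W D i t" unfolding cls_def by (auto simp: less_Suc_eq_le)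
  obtain t' where "t' \<le> D - i' div (W-1)" "\<not> comparable (leW W D) (elem W D i' t') (elem W D i t)"
    using elem_inc[OF W i(1) i(2) t(1)] by blast
  thus "\<exists>u\<in>set (cls W D i'). \<not> comparable (leW W D) u v" unfolding cls_def using t(2) by force
qed

lemma pre_distinct:
  assumes W: "W \<ge> 2"
  shows "distinct (concat (map (cls W D) [0..<(D+1)*(W-1)]))"
proof (rule distinct_concat)
  have "inj_on (cls W D) {0..<(D+1)*(W-1)}"
  proof (rule inj_onI)
    fix c c' assume c: "c \<in> {0..<(D+1)*(W-1)}" "c' \<in> {0..<(D+1)*(W-1)}" "cls W D c = cls W D c'"
    hence "hd (cls W D c) = hd (cls W D c')" by simp
    hence "elem W D c 0 = elem W D c' 0" unfolding cls_def by (simp add: upt_conv_Cons)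
    moreover have "c < (D+1)*(W-1)" "c' < (D+1)*(W-1)" using c by auto
    ultimately show "c = c'" using elem_inj[OF W, where c=c and c'=c' and t=0 and t'=0] by blast
  qed
  thus "distinct (map (cls W D) [0..<(D+1)*(W-1)])" by (simp add: distinct_map)
next
  fix ys assume "ys \<in> set (map (cls W D) [0..<(D+1)*(W-1)])"
  then obtain c where c: "c < (D+1)*(W-1)" "ys = cls W D c"
    unfolding set_map set_upt image_iff by (auto simp only: atLeastLessThan_iff)
  have "inj_on (elem W D c) {0..<D - c div (W-1) + 1}"
  proof (rule inj_onI)
    fix t t' assume "elem W D c t = elem W D c t'"
    thus "t = t'" using elem_inj[OF W c(1) c(1)] by blast
  qed
  thus "distinct ys" unfolding c(2) cls_def by (simp add: distinct_map)
next
  fix ys zs assume yz: "ys \<in> set (map (cls W D) [0..<(D+1)*(W-1)])"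
    "zs \<in> set (map (cls W D) [0..<(D+1)*(W-1)])" "ys \<noteq> zs"
  obtain c where c1: "c < (D+1)*(W-1)" "ys = cls W D c"
    using yz(1) unfolding set_map set_upt image_iff by (auto simp only: atLeastLessThan_iff)
  obtain c' where c2: "c' < (D+1)*(W-1)" "zs = cls W D c'"
    using yz(2) unfolding set_map set_upt image_iff by (auto simp only: atLeastLessThan_iff)
  have "c \<noteq> c'" using yz(3) c1 c2 by blast
  note c = c1 c2 this
  show "set ys \<inter> set zs = {}"
  proof (rule ccontr)
    assume "set ys \<inter> set zs \<noteq> {}"
    then obtain x where x: "x \<in> set ys" "x \<in> set zs" by blast
    obtain t where t: "x = elem W D c t" using x(1) c1(2) unfolding cls_def by auto
    obtain t' where t': "x = elem W D c' t'" using x(2) c2(2) unfolding cls_def by auto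
    have "c = c'" using elem_inj[OF W c1(1) c2(1), where t=t and t'=t'] t t' by simp
    thus False using c(5) by simp
  qed
qed

lemma pre_bound:
  assumes W: "W \<ge> 2"
  shows "set (concat (map (cls W D) [0..<(D+1)*(W-1)])) \<subseteq> {..<(D+1)*(D+1)*W}"
  using elem_bound[OF W] unfolding cls_def by auto

theorem theorem6:
  fixes k w :: nat
  assumes "k \<ge> 2" and "w \<ge> 2"
  shows "\<exists>(P :: nat set) (le :: nat \<Rightarrow> nat \<Rightarrow> bool) (xs :: nat list).
           finite P \<and> poset_on P le \<and> width P le = w \<and> \<not> contains_kk P le k \<and>
           distinct xs \<and> set xs = P \<and>
           length (first_fit le xs) \<ge> (k - 1) * (w - 1)"
proof -
  define D where "D = k - 2"
  define N where "N = (D+1)*(D+1)"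
  define pre where "pre = concat (map (cls w D) [0..<(D+1)*(w-1)])"
  define xs where "xs = pre @ filter (\<lambda>n. n \<notin> set pre) [0..<N*w]"
  have N1: "N \<ge> 1" unfolding N_def by simp
  have sub: "set pre \<subseteq> {..<N*w}" unfolding pre_def N_def using pre_bound[OF assms(2)] .
  have setxs: "set xs = {..<N*w}" unfolding xs_def using sub by auto
  have dpre: "distinct pre" unfolding pre_def by (rule pre_distinct[OF assms(2)])
  have dxs: "distinct xs" unfolding xs_def using dpre by auto
  have "first_fit (leW w D) xs =
        foldl (\<lambda>cs v. ff_insert (leW w D) v cs) (first_fit (leW w D) pre) (filter (\<lambda>n. n \<notin> set pre) [0..<N*w])"
    unfolding xs_def first_fit_def by simp
  hence "length (first_fit (leW w D) xs) \<ge> length (first_fit (leW w D) pre)"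
    using ff_fold_len by metis
  moreover have "length (first_fit (leW w D) pre) = (D+1)*(w-1)"
    unfolding pre_def using ff_pre[OF assms(2)] by simp
  moreover have "D + 1 = k - 1" unfolding D_def using assms(1) by simp
  ultimately have len: "length (first_fit (leW w D) xs) \<ge> (k-1)*(w-1)" by (simp only:)
  show ?thesis
  proof (intro exI conjI)
    show "finite {..<N*w}" by simp
    show "poset_on {..<N*w} (leW w D)" by (rule leW_poset)
    show "width {..<N*w} (leW w D) = w" by (rule width_eq[OF assms(2) N1])
    show "\<not> contains_kk {..<N*w} (leW w D) k" unfolding D_def by (rule kk_free[OF assms(1)])
    show "distinct xs" by (rule dxs)
    show "set xs = {..<N*w}" by (rule setxs)
    show "(k - 1) * (w - 1) \<le> length (first_fit (leW w D) xs)" by (rule len)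
  qed
qed

end
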